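(* For every $\epsilon>0$ there is $L_0>\pi\sqrt2$ such that for all $L>L_0$, $b_L(L/2)<2+\epsilon$.
   Context: For $\alpha\in(0,1/\sqrt2)$ let $L_\alpha=\pi/\mathrm{AGM}(\alpha,\tfrac12\sqrt{1+2\alpha^2})$ (arithmetic–geometric mean); $\alpha\mapsto L_\alpha$ is a decreasing bijection from $(0,1/\sqrt2)$ onto $(\pi\sqrt2,\infty)$. For $L>\pi\sqrt2$ let $\alpha$ satisfy $L_\alpha=L$ and let $x_0>y_0>0$ satisfy $x_0^2+y_0^2=1$, $x_0y_0=\alpha^2$. Let $(x_L,y_L,z_L)(t)$ solve $x'=-xz$, $y'=yz$, $z'=x^2-y^2$ ($'=d/dt$) with initial value $(x_0,y_0,0)$, and let $a_L,b_L$ solve $a'=2x_L+az_L$, $b'=2y_L-bz_L$ with $a_L(0)=b_L(0)=0$. *)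

theory Defs
  imports "HOL-Analysis.Analysis"
begin

fun agm_seq :: "real \<Rightarrow> real \<Rightarrow> nat \<Rightarrow> real \<times> real" where
  "agm_seq a b 0 = (a, b)"
| "agm_seq a b (Suc n) =
     (let (p, q) = agm_seq a b n in ((p + q) / 2, sqrt (p * q)))"

definition AGM :: "real \<Rightarrow> real \<Rightarrow> real" where
  "AGM a b = lim (\<lambda>n. fst (agm_seq a b n))"

definition L_alpha :: "real \<Rightarrow> real" where
  "L_alpha \<alpha> = pi / AGM \<alpha> (sqrt (1 + 2 * \<alpha>\<^sup>2) / 2)"

definition ode_solution ::
  "real \<Rightarrow> real \<Rightarrow> (real \<Rightarrow> real) \<Rightarrow> (real \<Rightarrow> real) \<Rightarrow> (real \<Rightarrow> real)
     \<Rightarrow> (real \<Rightarrow> real) \<Rightarrow> (real \<Rightarrow> real) \<Rightarrow> bool" where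
  "ode_solution x0 y0 x y z a b \<longleftrightarrow>
     x 0 = x0 \<and> y 0 = y0 \<and> z 0 = 0 \<and> a 0 = 0 \<and> b 0 = 0 \<and>
     (\<forall>t. (x has_real_derivative (- x t * z t)) (at t)) \<and>
     (\<forall>t. (y has_real_derivative (y t * z t)) (at t)) \<and>
     (\<forall>t. (z has_real_derivative ((x t)\<^sup>2 - (y t)\<^sup>2)) (at t)) \<and>
     (\<forall>t. (a has_real_derivative (2 * x t + a t * z t)) (at t)) \<and>
     (\<forall>t. (b has_real_derivative (2 * y t - b t * z t)) (at t))"

end

theory Submission
  imports Defs
begin


lemma agm_seq_Suc': "agm_seq a b (Suc n) = agm_seq ((a+b)/2) (sqrt (a*b)) n"
  by (induction n) (auto simp: Let_def split: prod.splits)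

lemma agm_ord_step:
  assumes "0 < q" "q \<le> p"
  shows "q \<le> sqrt (p*q)" "sqrt (p*q) \<le> (p+q)/2" "(p+q)/2 \<le> p"
proof -
  have "sqrt (q*q) \<le> sqrt (p*q)" using assms by (intro real_sqrt_le_mono) (simp add: mult_right_mono)
  then show "q \<le> sqrt (p*q)" using assms by simp
  have e: "((p+q)/2)^2 - p*q = ((p-q)/2)^2" by (simp add: power2_eq_square field_simps)
  have "0 \<le> ((p-q)/2)^2" by simp
  then have "p*q \<le> ((p+q)/2)^2" using e by linarith
  then have "sqrt (p*q) \<le> sqrt (((p+q)/2)^2)" by (rule real_sqrt_le_mono)
  then show "sqrt (p*q) \<le> (p+q)/2" using assms by simp
  show "(p+q)/2 \<le> p" using assms by simp
qed

lemma agm_ord_inv: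
  assumes "0 < b" "b \<le> a"
  shows "b \<le> snd (agm_seq a b n) \<and> snd (agm_seq a b n) \<le> fst (agm_seq a b n) \<and> fst (agm_seq a b n) \<le> a"
proof (induction n)
  case 0 then show ?case using assms by simp
next
  case (Suc n)
  obtain p q where pq: "agm_seq a b n = (p,q)" by (cases "agm_seq a b n")
  with Suc have h: "b \<le> q" "q \<le> p" "p \<le> a" by auto
  with assms have "0 < q" by linarith
  note st = agm_ord_step[OF this h(2)]
  show ?case using pq h st by (auto simp: Let_def)
qed

lemma agm_ord_mono:
  assumes "0 < b" "b \<le> a"
  shows "snd (agm_seq a b n) \<le> snd (agm_seq a b (Suc n))" "fst (agm_seq a b (Suc n)) \<le> fst (agm_seq a b n)"
proof -
  obtain p q where pq: "agm_seq a b n = (p,q)" by (cases "agm_seq a b n")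
  with agm_ord_inv[OF assms, of n] have h: "b \<le> q" "q \<le> p" by auto
  with assms have "0 < q" by linarith
  note st = agm_ord_step[OF this h(2)]
  show "snd (agm_seq a b n) \<le> snd (agm_seq a b (Suc n))" "fst (agm_seq a b (Suc n)) \<le> fst (agm_seq a b n)"
    using pq st by (auto simp: Let_def)
qed

lemma agm_ord_conv:
  assumes "0 < b" "b \<le> a"
  obtains M where "b \<le> M" "(\<lambda>n. fst (agm_seq a b n)) \<longlonglongrightarrow> M" "(\<lambda>n. snd (agm_seq a b n)) \<longlonglongrightarrow> M"
    "\<And>n. snd (agm_seq a b n) \<le> M" "\<And>n. M \<le> fst (agm_seq a b n)"
proof -
  let ?P = "\<lambda>n. fst (agm_seq a b n)" and ?Q = "\<lambda>n. snd (agm_seq a b n)"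
  have inc: "incseq ?Q" using agm_ord_mono(1)[OF assms] by (simp add: incseq_SucI)
  have dec: "decseq ?P" using agm_ord_mono(2)[OF assms] by (simp add: decseq_SucI)
  have bQ: "\<forall>i. ?Q i \<le> a" and bP: "\<forall>i. b \<le> ?P i" using agm_ord_inv[OF assms] by (auto intro: order_trans)
  obtain Mq where Mq: "?Q \<longlonglongrightarrow> Mq" "\<forall>i. ?Q i \<le> Mq" using incseq_convergent[OF inc bQ] by blast
  obtain Mp where Mp: "?P \<longlonglongrightarrow> Mp" "\<forall>i. Mp \<le> ?P i" using decseq_convergent[OF dec bP] by blast
  have eq: "?P (Suc n) = (?P n + ?Q n)/2" for n by (cases "agm_seq a b n") (simp add: Let_def)
  have "(\<lambda>n. ?P (Suc n)) \<longlonglongrightarrow> Mp" using Mp(1) by (rule LIMSEQ_Suc)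
  moreover have "(\<lambda>n. ?P (Suc n)) \<longlonglongrightarrow> (Mp + Mq)/2" unfolding eq using Mp(1) Mq(1) by (auto intro!: tendsto_intros)
  ultimately have "Mp = (Mp + Mq)/2" using LIMSEQ_unique by blast
  then have "Mp = Mq" by simp
  have "b \<le> Mq" using Mq(2) agm_ord_inv[OF assms, of 0] by (metis order_trans)
  show ?thesis
    by (rule that[of Mq]) (use \<open>b \<le> Mq\<close> Mp Mq \<open>Mp = Mq\<close> in auto)
qed



definition ff :: "real \<Rightarrow> real \<Rightarrow> real \<Rightarrow> real" where
  "ff a b t = 1 / sqrt ((t^2 + a^2) * (t^2 + b^2))"

definition Phi :: "real \<Rightarrow> real \<Rightarrow> real \<Rightarrow> real" where
  "Phi a b u = integral {-1..u} (ff a b) - integral {-1..0} (ff a b)"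

definition Phiinf :: "real \<Rightarrow> real \<Rightarrow> real" where
  "Phiinf a b = Sup (Phi a b ` {0..})"

lemma ff_cont: "0 < a \<Longrightarrow> 0 < b \<Longrightarrow> continuous_on S (ff a b)"
  unfolding ff_def by (intro continuous_intros) (auto simp: add_pos_nonneg)

lemma ff_pos: "0 < a \<Longrightarrow> 0 < b \<Longrightarrow> 0 < ff a b t"
proof -
  assume "0 < a" "0 < b"
  then have "0 < t^2+a^2" "0 < t^2+b^2" by (simp_all add: add_nonneg_pos)
  then show ?thesis unfolding ff_def by simp
qed

lemma Phi_deriv:
  assumes "0 < a" "0 < b" "-1 < u"
  shows "(Phi a b has_real_derivative ff a b u) (at u)"
proof -
  have "((\<lambda>x. integral {-1..x} (ff a b)) has_real_derivative ff a b u) (at u within {-1..u+1})"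
    using assms by (intro integral_has_real_derivative ff_cont) auto
  then have "((\<lambda>x. integral {-1..x} (ff a b)) has_real_derivative ff a b u) (at u)"
    using assms by (simp add: at_within_Icc_at)
  then have "((\<lambda>x. integral {-1..x} (ff a b) - integral {-1..0} (ff a b)) has_real_derivative ff a b u - 0) (at u)"
    by (intro DERIV_diff DERIV_const)
  then show ?thesis unfolding Phi_def[abs_def] by simp
qed

lemma Phi_0: "Phi a b 0 = 0" by (simp add: Phi_def)

lemma Phi_strict:
  assumes "0 < a" "0 < b" "0 \<le> u" "u < v"
  shows "Phi a b u < Phi a b v"
proof (rule DERIV_pos_imp_increasing[OF assms(4)])
  fix x assume "u \<le> x" "x \<le> v"
  then show "\<exists>y. DERIV (Phi a b) x :> y \<and> y > 0"
    using assms by (intro exI[of _ "ff a b x"] conjI Phi_deriv ff_pos) auto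
qed

lemma Phi_mono:
  assumes "0 < a" "0 < b" "0 \<le> u" "u \<le> v"
  shows "Phi a b u \<le> Phi a b v"
  using Phi_strict[OF assms(1,2,3)] assms(4) by (cases "u = v") (auto simp: less_le)

lemma ff_le:
  assumes "0 < c" "c \<le> a" "c \<le> b"
  shows "ff a b t \<le> 1 / (t^2 + c^2)"
proof -
  have "(t^2+c^2)^2 \<le> (t^2 + a^2) * (t^2 + b^2)"
    unfolding power2_eq_square
    by (intro mult_mono add_left_mono) (use assms in \<open>auto intro: mult_mono\<close>)
  then have "sqrt ((t^2+c^2)^2) \<le> sqrt ((t^2 + a^2) * (t^2 + b^2))" by (rule real_sqrt_le_mono)
  moreover have "0 < t^2 + c^2" using assms by (simp add: add_nonneg_pos)
  ultimately show ?thesis unfolding ff_def by (simp add: frac_le)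
qed

lemma ff_ge:
  assumes "0 < a" "0 < b" "a \<le> C" "b \<le> C"
  shows "1 / (t^2 + C^2) \<le> ff a b t"
proof -
  have "(t^2 + a^2) * (t^2 + b^2) \<le> (t^2+C^2)^2"
    unfolding power2_eq_square
    by (intro mult_mono add_left_mono) (use assms in \<open>auto intro: mult_mono\<close>)
  then have "sqrt ((t^2 + a^2) * (t^2 + b^2)) \<le> sqrt ((t^2+C^2)^2)" by (rule real_sqrt_le_mono)
  moreover have "0 < sqrt ((t^2 + a^2) * (t^2 + b^2))" using assms by (simp add: add_nonneg_pos)
  ultimately show ?thesis unfolding ff_def by (simp add: frac_le)
qed

lemma arctan_deriv_c:
  assumes "0 < c"
  shows "((\<lambda>u. arctan (u/c) / c) has_real_derivative 1 / (u^2 + c^2)) (at u)"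
proof -
  have d1: "((\<lambda>u. u/c) has_real_derivative 1/c) (at u)"
    using DERIV_cdivide[OF DERIV_ident, of c] by simp
  have "((\<lambda>u. arctan (u/c)) has_real_derivative inverse (1 + (u/c)^2) * (1/c)) (at u)"
    by (rule DERIV_chain2[OF DERIV_arctan d1])
  then have "((\<lambda>u. arctan (u/c) / c) has_real_derivative (inverse (1 + (u/c)^2) * (1/c)) / c) (at u)"
    by (rule DERIV_cdivide)
  moreover have "(inverse (1 + (u/c)^2) * (1/c)) / c = 1 / (u^2 + c^2)"
  proof -
    have "0 < c*c + u*u" "0 < c*(c*c) + c*(u*u)" using assms by (simp_all add: add_pos_nonneg)
    then show ?thesis using assms by (simp add: field_simps power2_eq_square)
  qed
  ultimately show ?thesis by simp
qed

lemma Phi_le_arctan: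
  assumes "0 < c" "c \<le> a" "c \<le> b" "0 \<le> u"
  shows "Phi a b u \<le> arctan (u/c) / c"
proof -
  have "(\<lambda>u. arctan (u/c) / c - Phi a b u) 0 \<le> (\<lambda>u. arctan (u/c) / c - Phi a b u) u"
  proof (rule DERIV_nonneg_imp_nondecreasing[OF assms(4)])
    fix x assume "0 \<le> x" "x \<le> u"
    show "\<exists>y. ((\<lambda>u. arctan (u/c) / c - Phi a b u) has_real_derivative y) (at x) \<and> 0 \<le> y"
      using assms \<open>0 \<le> x\<close> ff_le[OF assms(1-3), of x]
      by (intro exI[of _ "1 / (x^2 + c^2) - ff a b x"] conjI DERIV_diff arctan_deriv_c Phi_deriv) auto
  qed
  then show ?thesis by (simp add: Phi_0)
qed

lemma Phi_ge_arctan: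
  assumes "0 < a" "0 < b" "a \<le> C" "b \<le> C" "0 \<le> u"
  shows "arctan (u/C) / C \<le> Phi a b u"
proof -
  have C: "0 < C" using assms by simp
  have "(\<lambda>u. Phi a b u - arctan (u/C) / C) 0 \<le> (\<lambda>u. Phi a b u - arctan (u/C) / C) u"
  proof (rule DERIV_nonneg_imp_nondecreasing[OF assms(5)])
    fix x assume "0 \<le> x" "x \<le> u"
    show "\<exists>y. ((\<lambda>u. Phi a b u - arctan (u/C) / C) has_real_derivative y) (at x) \<and> 0 \<le> y"
      using assms \<open>0 \<le> x\<close> ff_ge[OF assms(1-4), of x] C
      by (intro exI[of _ "ff a b x - 1 / (x^2 + C^2)"] conjI DERIV_diff arctan_deriv_c Phi_deriv) auto
  qed
  then show ?thesis by (simp add: Phi_0)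
qed

lemma Phi_bdd:
  assumes "0 < c" "c \<le> a" "c \<le> b" "0 \<le> u"
  shows "Phi a b u \<le> pi / (2*c)"
proof -
  have "arctan (u/c) / c \<le> (pi/2) / c" using arctan_ubound[of "u/c"] assms
    by (intro divide_right_mono) auto
  then show ?thesis using Phi_le_arctan[OF assms] by simp
qed

lemma Phiinf_props:
  assumes "0 < a" "0 < b"
  shows "(Phi a b \<longlongrightarrow> Phiinf a b) at_top"
    and "\<And>u. 0 \<le> u \<Longrightarrow> Phi a b u < Phiinf a b"
    and "\<And>c. 0 < c \<Longrightarrow> c \<le> a \<Longrightarrow> c \<le> b \<Longrightarrow> Phiinf a b \<le> pi/(2*c)"
    and "\<And>C. a \<le> C \<Longrightarrow> b \<le> C \<Longrightarrow> pi/(2*C) \<le> Phiinf a b"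
proof -
  define c where "c = min a b"
  have c: "0 < c" "c \<le> a" "c \<le> b" using assms by (auto simp: c_def)
  have bdd: "bdd_above (Phi a b ` {0..})"
    using Phi_bdd[OF c] by (auto intro!: bdd_aboveI)
  have up: "Phi a b u \<le> Phiinf a b" if "0 \<le> u" for u
    unfolding Phiinf_def using bdd that by (intro cSup_upper) auto
  show lim: "(Phi a b \<longlongrightarrow> Phiinf a b) at_top"
  proof (rule increasing_tendsto)
    show "\<forall>\<^sub>F n in at_top. Phi a b n \<le> Phiinf a b"
      using eventually_ge_at_top[of 0] by eventually_elim (use up in auto)
    fix x assume "x < Phiinf a b"
    then obtain u where u: "u \<in> {0..}" "x < Phi a b u" unfolding Phiinf_def
      using less_cSup_iff[OF _ bdd] by auto
    show "\<forall>\<^sub>F n in at_top. x < Phi a b n"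
      using eventually_ge_at_top[of u] by eventually_elim (use u Phi_mono[OF assms] in force)
  qed
  show "Phi a b u < Phiinf a b" if "0 \<le> u" for u
    using Phi_strict[OF assms that, of "u+1"] up[of "u+1"] that by simp
  show "Phiinf a b \<le> pi/(2*c')" if "0 < c'" "c' \<le> a" "c' \<le> b" for c'
    unfolding Phiinf_def by (rule cSup_least) (use Phi_bdd[OF that] in auto)
  show "pi/(2*C) \<le> Phiinf a b" if "a \<le> C" "b \<le> C" for C
  proof -
    have C: "0 < C" using that assms by simp
    have f1: "LIM u at_top. (1/C) * u :> at_top"
      using C by (intro filterlim_tendsto_pos_mult_at_top[OF tendsto_const] filterlim_ident) auto
    have f2: "LIM u at_top. u/C :> at_top"
      using f1 by (simp add: field_simps)
    have at: "((\<lambda>u. arctan (u/C)) \<longlongrightarrow> pi/2) at_top"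
      by (rule filterlim_compose[OF tendsto_arctan_at_top f2])
    have al: "((\<lambda>u. arctan (u/C) / C) \<longlongrightarrow> (pi/2)/C) at_top"
      using tendsto_divide[OF at tendsto_const[of C]] C by simp
    have ev: "\<forall>\<^sub>F u in at_top. arctan (u/C) / C \<le> Phi a b u"
      using eventually_ge_at_top[of 0] by eventually_elim (use Phi_ge_arctan[OF assms that] in auto)
    have "(pi/2)/C \<le> Phiinf a b" by (rule tendsto_le[OF _ lim al ev]) simp
    then show ?thesis by simp
  qed
qed



lemma ff_sym:
  assumes "0 < a" "0 < b" "0 < s"
  shows "ff a b (a*b/s) * (a*b/s^2) = ff a b s"
proof -
  have P: "((a*b/s)^2 + a^2) * ((a*b/s)^2 + b^2) = (a*b/s^2)^2 * ((s^2 + a^2) * (s^2 + b^2))"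
    using assms by (simp add: field_simps power2_eq_square)
  have "sqrt (((a*b/s)^2 + a^2) * ((a*b/s)^2 + b^2)) = (a*b/s^2) * sqrt ((s^2 + a^2) * (s^2 + b^2))"
    unfolding P real_sqrt_mult using assms by simp
  moreover have "0 < sqrt ((s^2 + a^2) * (s^2 + b^2))" using assms by (simp add: add_pos_nonneg)
  ultimately show ?thesis unfolding ff_def using assms by (simp add: field_simps)
qed

lemma Phi_sym:
  assumes "0 < a" "0 < b" "0 < s"
  shows "Phi a b (a*b/s) + Phi a b s = 2 * Phi a b (sqrt (a*b))"
proof -
  define h where "h s = Phi a b (a*b/s) + Phi a b s" for s
  have d: "DERIV h t :> 0" if t: "t \<in> {0<..<s + sqrt (a*b) + 1}" for t
  proof -
    from t have t0: "0 < t" by simp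
    have d1: "((\<lambda>s. a*b/s) has_real_derivative -(a*b/t^2)) (at t)"
      using DERIV_divide[OF DERIV_const[of "a*b"] DERIV_ident, of t] t0 by (simp add: power2_eq_square)
    have p: "0 < a*b/t" using assms t0 by simp
    have d2: "((\<lambda>s. Phi a b (a*b/s)) has_real_derivative ff a b (a*b/t) * -(a*b/t^2)) (at t)"
      by (rule DERIV_chain2[OF Phi_deriv d1]) (use assms p in simp_all)
    then have d3: "(h has_real_derivative ff a b (a*b/t) * -(a*b/t^2) + ff a b t) (at t)"
      unfolding h_def[abs_def] using assms t0 by (intro DERIV_add d2 Phi_deriv) auto
    show ?thesis using d3 ff_sym[OF assms(1,2) t0] by simp
  qed
  have sq: "0 < sqrt (a*b)" using assms by simp
  then have sq2: "0 < s + sqrt (a*b) + 1" "0 < sqrt (a*b) + 1" using assms by linarith+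
  have "h s = h (sqrt (a*b))"
    by (rule DERIV_isconst3[of 0 "s + sqrt (a*b) + 1" s "sqrt (a*b)" h]) (use assms d sq sq2 in auto)
  moreover have "h (sqrt (a*b)) = 2 * Phi a b (sqrt (a*b))"
  proof -
    have "a*b / sqrt (a*b) = sqrt (a*b)" using assms by (metis real_div_sqrt less_eq_real_def mult_pos_pos)
    then show ?thesis by (simp add: h_def)
  qed
  ultimately show ?thesis by (simp add: h_def)
qed

lemma Phi_isCont0: "0 < a \<Longrightarrow> 0 < b \<Longrightarrow> isCont (Phi a b) 0"
  using Phi_deriv[of a b 0] DERIV_isCont by auto

lemma Phiinf_half:
  assumes "0 < a" "0 < b"
  shows "Phiinf a b = 2 * Phi a b (sqrt (a*b))"
proof -
  have l1: "((\<lambda>s. a*b/s) \<longlongrightarrow> 0) at_top"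
    by (intro tendsto_divide_0[OF tendsto_const] filterlim_at_top_imp_at_infinity filterlim_ident)
  have l2: "((\<lambda>s. Phi a b (a*b/s)) \<longlongrightarrow> Phi a b 0) at_top"
    by (rule isCont_tendsto_compose[OF Phi_isCont0[OF assms] l1])
  have l3: "((\<lambda>s. Phi a b (a*b/s) + Phi a b s) \<longlongrightarrow> 0 + Phiinf a b) at_top"
    using tendsto_add[OF l2 Phiinf_props(1)[OF assms]] by (simp add: Phi_0)
  have ev: "\<forall>\<^sub>F s in at_top. 2 * Phi a b (sqrt (a*b)) = Phi a b (a*b/s) + Phi a b s"
    using eventually_gt_at_top[of 0] by eventually_elim (use Phi_sym[OF assms] in auto)
  have l4: "((\<lambda>s. Phi a b (a*b/s) + Phi a b s) \<longlongrightarrow> 2 * Phi a b (sqrt (a*b))) at_top"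
    by (rule Lim_transform_eventually[OF tendsto_const ev])
  show ?thesis using tendsto_unique[OF _ l3 l4] by simp
qed



lemma ff_landen:
  assumes "0 < a" "0 < b" "0 < s"
  shows "ff ((a+b)/2) (sqrt (a*b)) ((s - a*b/s)/2) * ((1 + a*b/s^2)/2) = 2 * ff a b s"
proof -
  define Pv where "Pv = (s^2 + a^2) * (s^2 + b^2)"
  have g2: "(sqrt (a*b))^2 = a*b" using assms by simp
  have Q: "(((s - a*b/s)/2)^2 + ((a+b)/2)^2) * (((s - a*b/s)/2)^2 + (sqrt (a*b))^2)
        = ((s^2 + a*b)/(4* s^2))^2 * Pv"
    unfolding g2 Pv_def using assms by (simp add: field_simps power2_eq_square)
  have pos: "0 < (s^2 + a*b)/(4* s^2)" using assms by (simp add: add_pos_pos)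
  have sq: "sqrt ((((s - a*b/s)/2)^2 + ((a+b)/2)^2) * (((s - a*b/s)/2)^2 + (sqrt (a*b))^2))
        = ((s^2 + a*b)/(4* s^2)) * sqrt Pv"
  proof -
    have "0 < s^2 + a*b" using assms by (simp add: add_pos_pos)
    then show ?thesis by (subst Q) (simp add: real_sqrt_mult)
  qed
  have Ppos: "0 < sqrt Pv" using assms by (simp add: Pv_def add_pos_nonneg)
  define X where "X = (s^2 + a*b)/(4 * s^2)"
  have f1: "ff ((a+b)/2) (sqrt (a*b)) ((s - a*b/s)/2) = 1 / (X * sqrt Pv)"
    unfolding ff_def sq X_def ..
  have f2: "ff a b s = 1 / sqrt Pv" unfolding ff_def Pv_def ..
  have e: "(1 + a*b/s^2)/2 = 2 * X"
    using assms by (simp add: X_def field_simps power2_eq_square)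
  have X: "0 < X" using pos by (simp add: X_def)
  have "1 / (X * sqrt Pv) * (2 * X) = 2 * (1 / sqrt Pv)" using X Ppos by (simp add: field_simps)
  then show ?thesis unfolding f1 f2 e .
qed

lemma Phiinf_step:
  assumes "0 < a" "0 < b"
  shows "Phiinf ((a+b)/2) (sqrt (a*b)) = Phiinf a b"
proof -
  define m g r where "m = (a+b)/2" and "g = sqrt (a*b)" and "r = sqrt (a*b)"
  define \<tau> where "\<tau> s = (s - a*b/s)/2" for s
  have m: "0 < m" and g: "0 < g" and r: "0 < r" using assms by (auto simp: m_def g_def r_def)
  have rr: "r * r = a*b" using assms by (simp add: r_def)
  have tau_ge: "(s - r)/2 \<le> \<tau> s" if "r \<le> s" for s
  proof -
    have "a*b/s \<le> r" using that r rr by (simp add: divide_le_eq) (metis mult_left_mono less_imp_le)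
    then have "s - r \<le> s - a*b/s" by linarith
    then show ?thesis unfolding \<tau>_def by (rule divide_right_mono) simp
  qed
  define F where "F s = Phi m g (\<tau> s) - 2 * (Phi a b s - Phi a b r)" for s
  have dF: "DERIV F s :> 0" if "r \<le> s" for s
  proof -
    have s: "0 < s" using that r by linarith
    have "0 \<le> (s - r)/2" using that by simp
    then have t0: "-1 < \<tau> s" using tau_ge[OF that] by linarith
    have dt: "(\<tau> has_real_derivative (1 + a*b/s^2)/2) (at s)"
    proof -
      have "((\<lambda>s. (s - a*b/s)/2) has_real_derivative (1 - (0 * s - a*b * 1)/(s* s))/2) (at s)"
        by (intro DERIV_cdivide DERIV_diff DERIV_ident DERIV_divide DERIV_const) (use s in simp)
      then show ?thesis unfolding \<tau>_def[abs_def] by (simp add: power2_eq_square)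
    qed
    have d1: "((\<lambda>s. Phi m g (\<tau> s)) has_real_derivative ff m g (\<tau> s) * ((1 + a*b/s^2)/2)) (at s)"
      by (rule DERIV_chain2[OF Phi_deriv[OF m g t0] dt])
    have d2: "(F has_real_derivative ff m g (\<tau> s) * ((1 + a*b/s^2)/2) - 2 * (ff a b s - 0)) (at s)"
      unfolding F_def[abs_def]
      by (intro DERIV_diff d1 DERIV_cmult DERIV_const Phi_deriv) (use assms s in auto)
    show ?thesis using d2 ff_landen[OF assms s] by (simp add: m_def g_def \<tau>_def)
  qed
  have Fr: "F r = 0"
  proof -
    have "a*b/r = r" using rr r by (simp add: field_simps)
    then show ?thesis by (simp add: F_def \<tau>_def Phi_0)
  qed
  have Feq: "F s = 0" if "r \<le> s" for s
  proof -
    have c: "continuous_on {r..s+1} F"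
      by (rule DERIV_atLeastAtMost_imp_continuous_on) (use dF in blast)
    have "F s = F r" by (rule DERIV_isconst2[OF _ c]) (use that dF in auto)
    then show ?thesis using Fr by simp
  qed
  have lim1: "filterlim \<tau> at_top at_top"
  proof (rule filterlim_at_top_mono)
    have "LIM s at_top. (1/2::real) * s :> at_top"
      by (intro filterlim_tendsto_pos_mult_at_top[OF tendsto_const] filterlim_ident) auto
    then show "LIM s at_top. (s - r)/2 :> at_top"
      by (rule filterlim_tendsto_add_at_top[OF tendsto_const[of "-r/2"], THEN filterlim_cong[THEN iffD1, rotated 3]]) (auto simp: field_simps)
    show "\<forall>\<^sub>F s in at_top. (s - r)/2 \<le> \<tau> s"
      using eventually_ge_at_top[of r] by eventually_elim (rule tau_ge)
  qed
  have l1: "((\<lambda>s. Phi m g (\<tau> s)) \<longlongrightarrow> Phiinf m g) at_top"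
    by (rule filterlim_compose[OF Phiinf_props(1)[OF m g] lim1])
  have l2: "((\<lambda>s. 2 * (Phi a b s - Phi a b r)) \<longlongrightarrow> 2 * (Phiinf a b - Phi a b r)) at_top"
    by (intro tendsto_intros Phiinf_props(1)[OF assms])
  have ev: "\<forall>\<^sub>F s in at_top. 2 * (Phi a b s - Phi a b r) = Phi m g (\<tau> s)"
    using eventually_ge_at_top[of r] by eventually_elim (use Feq in \<open>auto simp: F_def\<close>)
  have l3: "((\<lambda>s. Phi m g (\<tau> s)) \<longlongrightarrow> 2 * (Phiinf a b - Phi a b r)) at_top"
    by (rule Lim_transform_eventually[OF l2 ev])
  have "Phiinf m g = 2 * (Phiinf a b - Phi a b r)" using tendsto_unique[OF _ l1 l3] by simp
  also have "\<dots> = Phiinf a b" using Phiinf_half[OF assms] by (simp add: r_def)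
  finally show ?thesis by (simp add: m_def g_def)
qed



lemma Phiinf_agm:
  assumes b: "0 < b" "b \<le> a" and lp: "(\<lambda>n. fst (agm_seq a b n)) \<longlonglongrightarrow> M"
    and lq: "(\<lambda>n. snd (agm_seq a b n)) \<longlonglongrightarrow> M" and bM: "b \<le> M"
  shows "Phiinf a b = pi / (2*M)"
proof -
  define P Q where "P n = fst (agm_seq a b n)" and "Q n = snd (agm_seq a b n)" for n
  have inv: "b \<le> Q n" "Q n \<le> P n" for n using agm_ord_inv[OF b, of n] by (auto simp: P_def Q_def)
  have pos: "0 < Q n" "0 < P n" for n using inv[of n] b by linarith+
  have st: "P (Suc n) = (P n + Q n)/2" "Q (Suc n) = sqrt (P n * Q n)" for n
    by (cases "agm_seq a b n"; simp add: P_def Q_def Let_def)+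
  have K: "Phiinf (P n) (Q n) = Phiinf a b" for n
  proof (induction n)
    case 0 then show ?case by (simp add: P_def Q_def)
  next
    case (Suc n) then show ?case using Phiinf_step[OF pos(2) pos(1), of n] by (simp add: st)
  qed
  have M: "0 < M" using bM b by linarith
  have up: "Phiinf a b \<le> pi/(2 * Q n)" for n
    using Phiinf_props(3)[OF pos(2) pos(1) pos(1) inv(2) order_refl, of n] K[of n] by simp
  have lo: "pi/(2 * P n) \<le> Phiinf a b" for n
    using Phiinf_props(4)[OF pos(2) pos(1) order_refl inv(2), of n] K[of n] by simp
  have l1: "(\<lambda>n. pi/(2 * Q n)) \<longlonglongrightarrow> pi/(2*M)"
    using lq M unfolding Q_def by (auto intro!: tendsto_intros)
  have l2: "(\<lambda>n. pi/(2 * P n)) \<longlonglongrightarrow> pi/(2*M)"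
    using lp M unfolding P_def by (auto intro!: tendsto_intros)
  have "Phiinf a b \<le> pi/(2*M)" by (rule LIMSEQ_le_const[OF l1]) (use up in auto)
  moreover have "pi/(2*M) \<le> Phiinf a b" by (rule LIMSEQ_le_const2[OF l2]) (use lo in auto)
  ultimately show ?thesis by simp
qed



lemma left_limit_le:
  fixes f :: "real \<Rightarrow> real"
  assumes c: "isCont f T" and T: "0 < T" and le: "\<And>t. 0 \<le> t \<Longrightarrow> t < T \<Longrightarrow> f t \<le> K"
  shows "f T \<le> K"
proof (rule ccontr)
  assume "\<not> f T \<le> K"
  then have "K < f T" by simp
  from order_tendstoD(1)[OF c[unfolded isCont_def] this]
  have "\<forall>\<^sub>F t in at T. K < f t" .
  then obtain d where d: "0 < d" "\<And>t. t \<noteq> T \<Longrightarrow> dist t T < d \<Longrightarrow> K < f t"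
    unfolding eventually_at by auto
  define t where "t = max (T/2) (T - d/2)"
  have "0 \<le> t" "t < T" "t \<noteq> T" "dist t T < d" using T d(1) by (auto simp: t_def dist_real_def)
  then show False using d(2)[of t] le[of t] by auto
qed

definition HH :: "real \<Rightarrow> real \<Rightarrow> real \<Rightarrow> real" where
  "HH x0 y0 v = 2*x0 - 2*x0^2 / sqrt (v^2 + x0^2) + 2*y0* v / sqrt (v^2 + x0^2)"

lemma HH_0: "0 < x0 \<Longrightarrow> HH x0 y0 0 = 0"
  by (simp add: HH_def power2_eq_square)

lemma HH_le:
  assumes "0 < x0" "0 < y0" "0 \<le> v"
  shows "HH x0 y0 v \<le> 2*x0 + 2*y0"
proof -
  define q where "q = sqrt (v^2 + x0^2)"
  have q: "0 < q" using assms by (simp add: q_def add_nonneg_pos)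
  have vq: "v \<le> q" unfolding q_def by (rule real_le_rsqrt) (simp)
  have "2*y0* v / q \<le> 2*y0" using vq q assms by (simp add: divide_le_eq)
  moreover have "0 \<le> 2*x0^2 / q" using q by simp
  ultimately show ?thesis unfolding HH_def q_def[symmetric] by linarith
qed

lemma HH_deriv:
  assumes "0 < x0"
  shows "(HH x0 y0 has_real_derivative 2*x0^2*(v+y0) / (sqrt (v^2 + x0^2))^3) (at v)"
proof -
  define q where "q = sqrt (v^2 + x0^2)"
  have pos: "0 < v^2 + x0^2" using assms by (simp add: add_nonneg_pos)
  have q: "0 < q" using pos by (simp add: q_def)
  have qq: "q^2 = v^2 + x0^2" using pos by (simp add: q_def)
  have qnz: "sqrt (v^2 + x0^2) \<noteq> 0" using q unfolding q_def by linarith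
  have d0: "((\<lambda>v. v^2 + x0^2) has_real_derivative 2* v) (at v)"
    using DERIV_add[OF DERIV_pow[of 2 v] DERIV_const[of "x0^2"]] by simp
  have dq: "((\<lambda>v. sqrt (v^2 + x0^2)) has_real_derivative v / q) (at v)"
    using DERIV_chain2[OF DERIV_real_sqrt[OF pos] d0] q by (simp add: q_def field_simps)
  have d1: "((\<lambda>v. 2*x0^2 / sqrt (v^2 + x0^2)) has_real_derivative (0 * q - 2*x0^2 * (v/q)) / (q*q)) (at v)"
    using DERIV_divide[OF DERIV_const[of "2*x0^2"] dq qnz] by (simp only: q_def[symmetric])
  have d2: "((\<lambda>v. 2*y0* v / sqrt (v^2 + x0^2)) has_real_derivative (2*y0 * q - 2*y0* v * (v/q)) / (q*q)) (at v)"
    using DERIV_divide[OF DERIV_cmult[OF DERIV_ident, of "2*y0"] dq qnz] by (simp only: q_def[symmetric] mult_1_right)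
  have d: "(HH x0 y0 has_real_derivative 0 - (0 * q - 2*x0^2 * (v/q)) / (q*q) + (2*y0 * q - 2*y0* v * (v/q)) / (q*q)) (at v)"
    unfolding HH_def[abs_def] by (intro DERIV_add DERIV_diff DERIV_const d1 d2)
  have "0 - (0 * q - 2*x0^2 * (v/q)) / (q*q) + (2*y0 * q - 2*y0* v * (v/q)) / (q*q)
      = (2*x0^2* v + 2*y0*(q^2 - v^2)) / q^3"
    using q by (simp add: field_simps power2_eq_square power3_eq_cube)
  also have "\<dots> = 2*x0^2*(v+y0) / q^3" unfolding qq by (simp add: algebra_simps)
  finally show ?thesis using d by (simp add: q_def)
qed

context
  fixes al x0 y0 :: real and x y z a b :: "real \<Rightarrow> real"
  assumes al: "0 < al" and y0: "0 < y0" and x0y0: "y0 < x0" and n1: "x0^2 + y0^2 = 1"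
    and p: "x0 * y0 = al^2" and ode: "ode_solution x0 y0 x y z a b"
begin

lemma init: "x 0 = x0" "y 0 = y0" "z 0 = 0" "a 0 = 0" "b 0 = 0"
  using ode by (simp_all add: ode_solution_def)

lemma dx: "(x has_real_derivative (- x t * z t)) (at t)"
  and dy: "(y has_real_derivative (y t * z t)) (at t)"
  and dz: "(z has_real_derivative ((x t)^2 - (y t)^2)) (at t)"
  and db: "(b has_real_derivative (2 * y t - b t * z t)) (at t)"
  using ode by (simp_all add: ode_solution_def)

lemma cx: "isCont x t" by (rule DERIV_isCont[OF dx])
lemma cy: "isCont y t" by (rule DERIV_isCont[OF dy])
lemma cz: "isCont z t" by (rule DERIV_isCont[OF dz])
lemma cb: "isCont b t" by (rule DERIV_isCont[OF db])

lemma inv1: "x t * y t = x0 * y0"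
proof -
  have d: "DERIV (\<lambda>t. x t * y t) s :> 0" for s
    using DERIV_mult[OF dx dy, of s] by (simp add: algebra_simps)
  have "x t * y t = x 0 * y 0" using DERIV_isconst_all[of "\<lambda>t. x t * y t" t 0] d by blast
  then show ?thesis by (simp add: init)
qed

lemma inv2: "(x t)^2 + (y t)^2 + (z t)^2 = 1"
proof -
  have d: "DERIV (\<lambda>t. x t * x t + y t * y t + z t * z t) s :> 0" for s
    using DERIV_add[OF DERIV_add[OF DERIV_mult[OF dx dx] DERIV_mult[OF dy dy]] DERIV_mult[OF dz dz], of s]
    by (simp add: algebra_simps power2_eq_square)
  have "x t * x t + y t * y t + z t * z t = x 0 * x 0 + y 0 * y 0 + z 0 * z 0"
    using DERIV_isconst_all[of "\<lambda>t. x t * x t + y t * y t + z t * z t" t 0] d by blast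
  then show ?thesis using n1 by (simp add: init power2_eq_square)
qed

lemma xpos: "0 < x t"
proof (rule ccontr)
  assume "\<not> 0 < x t"
  then have xt: "x t \<le> 0" by simp
  have nz: "x s \<noteq> 0" for s using inv1[of s] y0 x0y0 by auto
  have x00: "0 \<le> x 0" using init y0 x0y0 by simp
  show False
  proof (cases "0 \<le> t")
    case True
    from IVT2[of x t 0 0] xt x00 True cx obtain s where "x s = 0" by auto
    with nz show False by blast
  next
    case False
    from IVT[of x t 0 0] xt x00 False cx obtain s where "x s = 0" by auto
    with nz show False by blast
  qed
qed

lemma ypos: "0 < y t"
  using inv1[of t] xpos[of t] y0 x0y0 by (metis mult_pos_pos order_less_trans zero_less_mult_pos)

definition DD :: "real \<Rightarrow> real" where "DD t = x t * x0 - y t * y0"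
definition uu :: "real \<Rightarrow> real" where "uu t = al^2 * z t / DD t"
definition ww :: "real \<Rightarrow> real" where "ww t = al^2 * (x0^2 - y0^2) / DD t"

lemma cDD: "isCont DD t" unfolding DD_def[abs_def] by (intro continuous_intros cx cy)

lemma dDD: "(DD has_real_derivative (- x t * z t) * x0 - (y t * z t) * y0) (at t)"
  unfolding DD_def[abs_def] by (intro DERIV_diff DERIV_cmult_right dx dy)

lemma DD0: "DD 0 = x0^2 - y0^2" by (simp add: DD_def init power2_eq_square)

lemma gap: "0 < x0^2 - y0^2"
  using x0y0 y0 by (simp add: power_strict_mono)

lemma K1: "(y t * x0 - x t * y0) * DD t = al^2 * (z t)^2"
  using inv1[of t] inv2[of t] n1 p unfolding DD_def by algebra

lemma du:
  assumes "DD t \<noteq> 0"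
  shows "(uu has_real_derivative ww t) (at t)"
proof -
  have d: "(uu has_real_derivative (al^2 * ((x t)^2 - (y t)^2) * DD t - al^2 * z t * ((- x t * z t) * x0 - (y t * z t) * y0)) / (DD t * DD t)) (at t)"
    unfolding uu_def[abs_def] by (intro DERIV_divide DERIV_cmult dz dDD assms)
  have eq: "al^2 * ((x t)^2 - (y t)^2) * DD t - al^2 * z t * ((- x t * z t) * x0 - (y t * z t) * y0)
      = al^2 * (x0^2 - y0^2) * DD t"
    using inv1[of t] inv2[of t] n1 p unfolding DD_def by algebra
  have e2: "(al^2 * (x0^2 - y0^2) * DD t) / (DD t * DD t) = ww t"
    using assms by (simp add: ww_def)
  show ?thesis using d unfolding eq e2 .
qed


lemma wwpos: "0 < DD t \<Longrightarrow> 0 < ww t"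
  using gap al unfolding ww_def by simp

lemma poly_x: "(al^2 * z t)^2 + x0^2 * (DD t)^2 = x0 * x t * (x0^2 - y0^2) * DD t"
  using inv1[of t] inv2[of t] n1 p unfolding DD_def by algebra

lemma poly_y: "(al^2 * z t)^2 + y0^2 * (DD t)^2 = y0 * y t * (x0^2 - y0^2) * DD t"
  using inv1[of t] inv2[of t] n1 p unfolding DD_def by algebra

lemma sq_x:
  assumes "0 < DD t"
  shows "(uu t)^2 + x0^2 = x0 * x t * (x0^2 - y0^2) / DD t"
proof -
  have "(uu t)^2 + x0^2 = ((al^2 * z t)^2 + x0^2 * (DD t)^2) / (DD t)^2"
    using assms by (simp add: uu_def field_simps)
  also have "\<dots> = x0 * x t * (x0^2 - y0^2) * DD t / (DD t)^2" unfolding poly_x ..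
  also have "\<dots> = x0 * x t * (x0^2 - y0^2) / DD t" using assms by (simp add: power2_eq_square)
  finally show ?thesis .
qed

lemma sq_y:
  assumes "0 < DD t"
  shows "(uu t)^2 + y0^2 = y0 * y t * (x0^2 - y0^2) / DD t"
proof -
  have "(uu t)^2 + y0^2 = ((al^2 * z t)^2 + y0^2 * (DD t)^2) / (DD t)^2"
    using assms by (simp add: uu_def field_simps)
  also have "\<dots> = y0 * y t * (x0^2 - y0^2) * DD t / (DD t)^2" unfolding poly_y ..
  also have "\<dots> = y0 * y t * (x0^2 - y0^2) / DD t" using assms by (simp add: power2_eq_square)
  finally show ?thesis .
qed

lemma prod_sq:
  assumes "0 < DD t"
  shows "((uu t)^2 + x0^2) * ((uu t)^2 + y0^2) = (ww t)^2"
proof -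
  have "((uu t)^2 + x0^2) * ((uu t)^2 + y0^2)
      = (x0 * y0) * (x t * y t) * (x0^2 - y0^2)^2 / (DD t)^2"
    unfolding sq_x[OF assms] sq_y[OF assms] by (simp add: power2_eq_square field_simps)
  also have "\<dots> = (ww t)^2" unfolding inv1 p ww_def by (simp add: power2_eq_square field_simps)
  finally show ?thesis .
qed

lemma speed:
  assumes "0 < DD t"
  shows "ff x0 y0 (uu t) * ww t = 1"
proof -
  have "sqrt (((uu t)^2 + x0^2) * ((uu t)^2 + y0^2)) = ww t"
    unfolding prod_sq[OF assms] using wwpos[OF assms] by simp
  then show ?thesis unfolding ff_def using wwpos[OF assms] by simp
qed

lemma ysq:
  assumes "0 < DD t"
  shows "(y t)^2 = x0^2 * ((uu t)^2 + y0^2) / ((uu t)^2 + x0^2)"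
proof -
  have xt: "0 < x t" by (rule xpos)
  have "x0^2 * ((uu t)^2 + y0^2) / ((uu t)^2 + x0^2) = x0 * y0 * y t / x t"
    unfolding sq_x[OF assms] sq_y[OF assms] using assms gap xt y0 x0y0
    by (simp add: field_simps power2_eq_square)
  also have "\<dots> = (y t)^2" unfolding inv1[of t, symmetric] using xt by (simp add: power2_eq_square)
  finally show ?thesis by simp
qed


lemma x0pos: "0 < x0" using y0 x0y0 by linarith

lemma key_ineq:
  assumes "0 < DD s" "0 \<le> uu s"
  shows "2 * (y s)^2 \<le> 2*x0^2*(uu s + y0) / (sqrt ((uu s)^2 + x0^2))^3 * ww s"
proof -
  define u q r where "u = uu s" and "q = sqrt ((uu s)^2 + x0^2)" and "r = sqrt ((uu s)^2 + y0^2)"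
  have u: "0 \<le> u" using assms by (simp add: u_def)
  have pq: "0 < (uu s)^2 + x0^2" "0 < (uu s)^2 + y0^2" using x0pos y0 by (simp_all add: add_nonneg_pos)
  have q: "0 < q" and r: "0 < r" using pq by (simp_all add: q_def r_def)
  have qq: "q^2 = u^2 + x0^2" and rr: "r^2 = u^2 + y0^2" using pq by (simp_all add: q_def r_def u_def)
  have w: "ww s = q * r"
  proof -
    have "ww s = sqrt ((ww s)^2)" using wwpos[OF assms(1)] by simp
    also have "\<dots> = q * r" unfolding prod_sq[OF assms(1), symmetric] q_def r_def by (simp add: real_sqrt_mult)
    finally show ?thesis .
  qed
  have ys: "(y s)^2 = x0^2 * r^2 / q^2" using ysq[OF assms(1)] qq rr by (simp add: u_def)
  have rle: "r \<le> u + y0"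
  proof -
    have "u^2 + y0^2 \<le> (u + y0)^2" using u y0 by (simp add: power2_eq_square algebra_simps)
    then have "sqrt (u^2 + y0^2) \<le> sqrt ((u + y0)^2)" by (rule real_sqrt_le_mono)
    then show ?thesis using u y0 by (simp add: r_def u_def)
  qed
  have "r * r \<le> (u + y0) * r" using rle r by (simp add: mult_right_mono)
  then have "(2*x0^2/q^2) * (r * r) \<le> (2*x0^2/q^2) * ((u + y0) * r)"
    by (rule mult_left_mono) simp
  moreover have "2 * (y s)^2 = (2*x0^2/q^2) * (r * r)" unfolding ys by (simp add: power2_eq_square)
  moreover have "2*x0^2*(u + y0) / q^3 * (q * r) = (2*x0^2/q^2) * ((u + y0) * r)"
    using q by (simp add: field_simps power2_eq_square power3_eq_cube)
  ultimately show ?thesis unfolding w u_def q_def by simp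
qed

lemma main_interval:
  assumes pos: "\<And>s. 0 \<le> s \<Longrightarrow> s \<le> t1 \<Longrightarrow> 0 < DD s" and t: "0 \<le> t" "t \<le> t1"
  shows "0 \<le> uu t \<and> Phi x0 y0 (uu t) = t \<and> b t * y t \<le> 2*x0 + 2*y0"
proof -
  have u0: "uu 0 = 0" by (simp add: uu_def init)
  have dus: "DERIV uu s :> ww s" if "0 \<le> s" "s \<le> t1" for s
    using du pos[OF that] by simp
  have unn: "0 \<le> uu s" if s: "0 \<le> s" "s \<le> t1" for s
  proof (cases "s = 0")
    case True then show ?thesis by (simp add: u0)
  next
    case False
    then have "0 < s" using s by simp
    then have "uu 0 < uu s"
    proof (rule DERIV_pos_imp_increasing)
      fix v assume "0 \<le> v" "v \<le> s"
      then show "\<exists>y. DERIV uu v :> y \<and> 0 < y"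
        using dus[of v] wwpos[of v] pos[of v] s by (intro exI[of _ "ww v"]) auto
    qed
    then show ?thesis by (simp add: u0)
  qed
  define G where "G s = Phi x0 y0 (uu s) - s" for s
  have dG: "DERIV G s :> 0" if s: "0 \<le> s" "s \<le> t1" for s
  proof -
    have m1: "-1 < uu s" using unn[OF s] by linarith
    have d1: "DERIV (\<lambda>s. Phi x0 y0 (uu s)) s :> ff x0 y0 (uu s) * ww s"
      by (rule DERIV_chain2[OF Phi_deriv[OF x0pos y0 m1] dus[OF s]])
    have "DERIV G s :> ff x0 y0 (uu s) * ww s - 1"
      unfolding G_def[abs_def] by (intro DERIV_diff d1 DERIV_ident)
    then show ?thesis using speed[OF pos[OF s]] by simp
  qed
  have Gt: "G t = 0"
  proof (cases "t = 0")
    case True then show ?thesis by (simp add: G_def u0 Phi_0)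
  next
    case False
    then have t0: "0 < t" using t by simp
    have c: "continuous_on {0..t} G"
      by (rule DERIV_atLeastAtMost_imp_continuous_on) (use dG t in force)
    have "G t = G 0" by (rule DERIV_isconst2[OF t0 c]) (use dG t in auto)
    then show ?thesis by (simp add: G_def u0 Phi_0)
  qed
  define Psi where "Psi s = HH x0 y0 (uu s) - b s * y s" for s
  have dPsi: "\<exists>D. DERIV Psi s :> D \<and> 0 \<le> D" if s: "0 \<le> s" "s \<le> t" for s
  proof -
    have s1: "s \<le> t1" using s t by linarith
    have d1: "DERIV (\<lambda>s. HH x0 y0 (uu s)) s :> 2*x0^2*(uu s + y0) / (sqrt ((uu s)^2 + x0^2))^3 * ww s"
      by (rule DERIV_chain2[OF HH_deriv[OF x0pos] dus[OF s(1) s1]])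
    have "DERIV Psi s :> 2*x0^2*(uu s + y0) / (sqrt ((uu s)^2 + x0^2))^3 * ww s
        - ((2 * y s - b s * z s) * y s + (y s * z s) * b s)"
      unfolding Psi_def[abs_def] by (intro DERIV_diff d1 DERIV_mult db dy)
    moreover have "(2 * y s - b s * z s) * y s + (y s * z s) * b s = 2 * (y s)^2"
      by (simp add: algebra_simps power2_eq_square)
    ultimately show ?thesis using key_ineq[OF pos[OF s(1) s1] unn[OF s(1) s1]] by (intro exI[of _ "2*x0^2*(uu s + y0) / (sqrt ((uu s)^2 + x0^2))^3 * ww s - 2 * (y s)^2"]) auto
  qed
  have "Psi 0 \<le> Psi t" by (rule DERIV_nonneg_imp_nondecreasing[OF t(1)]) (use dPsi in blast)
  moreover have "Psi 0 = 0" by (simp add: Psi_def u0 HH_0[OF x0pos] init)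
  moreover have "HH x0 y0 (uu t) \<le> 2*x0 + 2*y0" by (rule HH_le[OF x0pos y0 unn[OF t]])
  ultimately have "b t * y t \<le> 2*x0 + 2*y0" by (simp add: Psi_def)
  then show ?thesis using unn[OF t] Gt by (simp add: G_def)
qed


lemma usq:
  assumes "0 < DD t"
  shows "(uu t)^2 = al^2 * (y t * x0 - x t * y0) / DD t"
proof -
  have "(uu t)^2 = al^2 * (al^2 * (z t)^2) / (DD t)^2"
    by (simp add: uu_def power2_eq_square)
  also have "\<dots> = al^2 * ((y t * x0 - x t * y0) * DD t) / (DD t)^2" unfolding K1 ..
  also have "\<dots> = al^2 * (y t * x0 - x t * y0) / DD t" using assms by (simp add: power2_eq_square)
  finally show ?thesis .
qed

lemma final: "b (Phiinf x0 y0) \<le> 2 + 2*y0/x0"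
proof -
  define C where "C = Phiinf x0 y0"
  have Cgt: "Phi x0 y0 v < C" if "0 \<le> v" for v
    using Phiinf_props(2)[OF x0pos y0 that] by (simp add: C_def)
  have Cpos: "0 < C" using Cgt[of 0] by (simp add: Phi_0)
  have DD0p: "0 < DD 0" using gap by (simp add: DD0)
  have a: "\<not> (\<forall>s. 0 \<le> s \<and> s \<le> t1 \<longrightarrow> 0 < DD s)" if "C \<le> t1" for t1
  proof
    assume h: "\<forall>s. 0 \<le> s \<and> s \<le> t1 \<longrightarrow> 0 < DD s"
    have "0 \<le> uu t1 \<and> Phi x0 y0 (uu t1) = t1 \<and> b t1 * y t1 \<le> 2*x0 + 2*y0"
      by (rule main_interval) (use h Cpos that in auto)
    then show False using Cgt[of "uu t1"] that by auto
  qed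
  define S where "S = {0..} \<inter> {t. DD t \<le> 0}"
  have Sne: "S \<noteq> {}" using a[of C] by (auto simp: S_def not_less)
  have Sbdd: "bdd_below S" unfolding S_def by (rule bdd_belowI[of _ 0]) auto
  have Scl: "closed S" unfolding S_def
  proof (intro closed_Int closed_atLeast)
    have "continuous_on UNIV DD" using cDD by (simp add: continuous_at_imp_continuous_on)
    then show "closed {t. DD t \<le> 0}" by (intro closed_Collect_le continuous_on_const) auto
  qed
  define T where "T = Inf S"
  have TS: "T \<in> S" unfolding T_def by (rule closed_contains_Inf[OF Sne Sbdd Scl])
  have T0: "0 \<le> T" and DDT: "DD T \<le> 0" using TS by (auto simp: S_def)
  have before: "0 < DD t" if "0 \<le> t" "t < T" for t
  proof (rule ccontr)
    assume "\<not> 0 < DD t"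
    then have "t \<in> S" using that by (auto simp: S_def)
    then have "T \<le> t" unfolding T_def by (rule cInf_lower[OF _ Sbdd])
    then show False using that by simp
  qed
  have Tpos: "0 < T" using T0 DDT DD0p by (cases "T = 0") auto
  have "(\<lambda>t. - DD t) T \<le> 0"
  proof (rule left_limit_le[OF _ Tpos])
    show "isCont (\<lambda>t. - DD t) T" by (intro continuous_intros cDD)
    fix t assume "0 \<le> t" "t < T"
    then show "- DD t \<le> 0" using before[of t] by simp
  qed
  then have DDT0: "DD T = 0" using DDT by simp
  have TC: "T \<le> C"
  proof (rule ccontr)
    assume "\<not> T \<le> C"
    then show False using a[of C] before by auto
  qed
  have xT: "x T = y0" and yT: "y T = x0"
  proof -
    have e1: "x T * x0 = y T * y0" using DDT0 by (simp add: DD_def)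
    have e2: "x T * y T = x0 * y0" by (rule inv1)
    have "(x T)^2 * x0 = y0^2 * x0" using e1 e2
      by (metis (no_types, opaque_lifting) mult.commute mult.left_commute power2_eq_square)
    then have "(x T)^2 = y0^2" using x0pos by simp
    then show xT: "x T = y0" using xpos[of T] y0 by (simp add: power2_eq_iff)
    show "y T = x0" using e2 xT y0 by simp
  qed
  have CT: "C \<le> T"
  proof (rule ccontr)
    assume "\<not> C \<le> T"
    then have TC': "T < C" by simp
    have "\<forall>\<^sub>F v in at_top. T < Phi x0 y0 v"
      using order_tendstoD(1)[OF Phiinf_props(1)[OF x0pos y0]] TC' by (simp add: C_def)
    then obtain N where N: "\<And>v. N \<le> v \<Longrightarrow> T < Phi x0 y0 v" by (auto simp: eventually_at_top_linorder)
    define U where "U = max N 0"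
    have U: "0 \<le> U" "T < Phi x0 y0 U" using N[of U] by (auto simp: U_def)
    define E where "E t = al^2 * (y t * x0 - x t * y0) - U^2 * DD t" for t
    have "E T \<le> 0"
    proof (rule left_limit_le[OF _ Tpos])
      show "isCont E T" unfolding E_def[abs_def] by (intro continuous_intros cx cy cDD)
      fix t assume t: "0 \<le> t" "t < T"
      have "0 \<le> uu t \<and> Phi x0 y0 (uu t) = t \<and> b t * y t \<le> 2*x0 + 2*y0"
        by (rule main_interval[of t]) (use before t in auto)
      then have ut: "0 \<le> uu t" "Phi x0 y0 (uu t) = t" by auto
      have "uu t < U"
      proof (rule ccontr)
        assume "\<not> uu t < U"
        then have "Phi x0 y0 U \<le> Phi x0 y0 (uu t)" using Phi_mono[OF x0pos y0 U(1)] by simp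
        then show False using ut U t by simp
      qed
      then have "(uu t)^2 < U^2" using ut by (simp add: power_strict_mono)
      then have "al^2 * (y t * x0 - x t * y0) / DD t < U^2" using usq[OF before[OF t]] by simp
      then have "al^2 * (y t * x0 - x t * y0) < U^2 * DD t" using before[OF t] by (simp add: divide_less_eq)
      then show "E t \<le> 0" by (simp add: E_def)
    qed
    moreover have "E T = al^2 * (x0^2 - y0^2)" by (simp add: E_def DDT0 xT yT power2_eq_square)
    ultimately show False using al gap by (simp add: mult_le_0_iff)
  qed
  have TCe: "T = C" using TC CT by simp
  have "b T * y T \<le> 2*x0 + 2*y0"
  proof (rule left_limit_le[OF _ Tpos])
    show "isCont (\<lambda>t. b t * y t) T" by (intro continuous_intros cb cy)
    fix t assume t: "0 \<le> t" "t < T"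
    have "0 \<le> uu t \<and> Phi x0 y0 (uu t) = t \<and> b t * y t \<le> 2*x0 + 2*y0"
      by (rule main_interval[of t]) (use before t in auto)
    then show "b t * y t \<le> 2*x0 + 2*y0" by simp
  qed
  then have "b T \<le> (2*x0 + 2*y0) / x0" using x0pos yT by (simp add: le_divide_eq)
  also have "\<dots> = 2 + 2*y0/x0" using x0pos by (simp add: field_simps)
  finally show ?thesis using TCe by (simp add: C_def)
qed

end



lemma AGM_eq:
  assumes al: "0 < al" and y0: "0 < y0" and x0y0: "y0 < x0" and n1: "x0^2 + y0^2 = 1"
    and p: "x0 * y0 = al^2" and lp: "(\<lambda>n. fst (agm_seq x0 y0 n)) \<longlonglongrightarrow> M"
  shows "AGM al (sqrt (1 + 2 * al\<^sup>2) / 2) = M"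
proof -
  define s where "s = sqrt (1 + 2 * al\<^sup>2) / 2"
  have "(x0 + y0)^2 = 1 + 2 * al^2" using n1 p by (simp add: power2_eq_square algebra_simps)
  then have "sqrt (1 + 2 * al^2) = x0 + y0" using y0 x0y0 by (metis real_sqrt_abs abs_of_pos add_pos_pos order_less_trans)
  then have s: "(x0 + y0)/2 = s" by (simp add: s_def)
  have g: "sqrt (x0 * y0) = al" using p al by simp
  have e1: "agm_seq x0 y0 (Suc n) = agm_seq s al n" for n
    unfolding agm_seq_Suc' s g ..
  have e2: "fst (agm_seq al s (Suc n)) = fst (agm_seq x0 y0 (Suc (Suc n)))" for n
  proof -
    have "agm_seq x0 y0 (Suc (Suc n)) = agm_seq s al (Suc n)" by (rule e1)
    also have "\<dots> = agm_seq ((s+al)/2) (sqrt (s * al)) n" by (rule agm_seq_Suc')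
    also have "\<dots> = agm_seq ((al+s)/2) (sqrt (al * s)) n" by (simp add: add.commute mult.commute)
    also have "\<dots> = agm_seq al s (Suc n)" by (rule agm_seq_Suc'[symmetric])
    finally show ?thesis by simp
  qed
  have "(\<lambda>n. fst (agm_seq x0 y0 (Suc (Suc n)))) \<longlonglongrightarrow> M"
    using LIMSEQ_Suc[OF LIMSEQ_Suc[OF lp]] .
  then have "(\<lambda>n. fst (agm_seq al s (Suc n))) \<longlonglongrightarrow> M" unfolding e2 .
  then have "(\<lambda>n. fst (agm_seq al s n)) \<longlonglongrightarrow> M" by (rule LIMSEQ_imp_Suc)
  then show ?thesis unfolding AGM_def s_def[symmetric] by (rule limI)
qed

theorem lemma5p1:
  shows "\<forall>\<epsilon>>0. \<exists>L0>pi * sqrt 2. \<forall>L>L0. \<forall>\<alpha> x0 y0 x y z a b.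
           0 < \<alpha> \<and> \<alpha> < 1 / sqrt 2 \<and> L_alpha \<alpha> = L \<and>
           x0 > y0 \<and> y0 > 0 \<and> x0\<^sup>2 + y0\<^sup>2 = 1 \<and> x0 * y0 = \<alpha>\<^sup>2 \<and>
           ode_solution x0 y0 x y z a b
           \<longrightarrow> b (L / 2) < 2 + \<epsilon>"
proof (intro allI impI)
  fix \<epsilon> :: real assume e: "0 < \<epsilon>"
  define L0 where "L0 = pi * sqrt 2 + 4 * pi / \<epsilon>"
  have L0: "pi * sqrt 2 < L0" using e by (simp add: L0_def)
  show "\<exists>L0>pi * sqrt 2. \<forall>L>L0. \<forall>\<alpha> x0 y0 x y z a b.
           0 < \<alpha> \<and> \<alpha> < 1 / sqrt 2 \<and> L_alpha \<alpha> = L \<and>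
           x0 > y0 \<and> y0 > 0 \<and> x0\<^sup>2 + y0\<^sup>2 = 1 \<and> x0 * y0 = \<alpha>\<^sup>2 \<and>
           ode_solution x0 y0 x y z a b
           \<longrightarrow> b (L / 2) < 2 + \<epsilon>"
  proof (intro exI[of _ L0] conjI L0 allI impI)
    fix L al x0 y0 :: real and x y z a b :: "real \<Rightarrow> real"
    assume L: "L0 < L"
    assume h: "0 < al \<and> al < 1 / sqrt 2 \<and> L_alpha al = L \<and> y0 < x0 \<and> 0 < y0 \<and>
           x0\<^sup>2 + y0\<^sup>2 = 1 \<and> x0 * y0 = al\<^sup>2 \<and> ode_solution x0 y0 x y z a b"
    then have al: "0 < al" and La: "L_alpha al = L" and x0y0: "y0 < x0" and y0: "0 < y0"
      and n1: "x0^2 + y0^2 = 1" and p: "x0 * y0 = al^2" and ode: "ode_solution x0 y0 x y z a b"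
      by auto
    obtain M where M: "y0 \<le> M" "(\<lambda>n. fst (agm_seq x0 y0 n)) \<longlonglongrightarrow> M" "(\<lambda>n. snd (agm_seq x0 y0 n)) \<longlonglongrightarrow> M"
      using agm_ord_conv[OF y0 less_imp_le[OF x0y0]] by metis
    have Ph: "Phiinf x0 y0 = pi / (2*M)" by (rule Phiinf_agm[OF y0 less_imp_le[OF x0y0] M(2,3,1)])
    have AG: "AGM al (sqrt (1 + 2 * al\<^sup>2) / 2) = M" by (rule AGM_eq[OF al y0 x0y0 n1 p M(2)])
    have LM: "L = pi / M" using La AG by (simp add: L_alpha_def)
    have half: "L / 2 = Phiinf x0 y0" using LM Ph by simp
    have bnd: "b (L/2) \<le> 2 + 2*y0/x0" unfolding half by (rule final[OF al y0 x0y0 n1 p ode])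
    have Mpos: "0 < M" using M(1) y0 by linarith
    have "Phiinf x0 y0 \<le> pi / (2*y0)"
      by (rule Phiinf_props(3)[OF _ y0 y0]) (use x0y0 y0 in auto)
    then have "pi / (2*M) \<le> pi / (2*y0)" using Ph by simp
    then have "y0 \<le> M" using M(1) by simp
    have Lpos: "0 < L" using LM Mpos by simp
    have y0L: "y0 * L \<le> pi"
    proof -
      have "L / 2 \<le> pi / (2*y0)" using half \<open>Phiinf x0 y0 \<le> pi / (2*y0)\<close> by simp
      then show ?thesis using y0 by (simp add: field_simps)
    qed
    have x0h: "1/2 < x0"
    proof (rule ccontr)
      assume "\<not> 1/2 < x0"
      then have "x0 \<le> 1/2" by simp
      then have "x0^2 \<le> (1/2)^2" using x0y0 y0 by (intro power_mono) auto
      moreover have "y0^2 < x0^2" using x0y0 y0 by (simp add: power_strict_mono)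
      ultimately show False using n1 by (simp add: power2_eq_square)
    qed
    have "2*y0/x0 < 4*y0" using x0h y0 by (simp add: divide_less_eq)
    moreover have "4*y0 < \<epsilon>"
    proof -
      have "4 * pi / \<epsilon> < L" using L L0_def pi_gt_zero by (smt (verit) real_sqrt_ge_zero mult_nonneg_nonneg)
      then have "4 * pi < \<epsilon> * L" using e by (simp add: divide_less_eq mult.commute)
      moreover have "4 * (y0 * L) \<le> 4 * pi" using y0L by simp
      ultimately have "4 * y0 * L < \<epsilon> * L" by simp
      then show ?thesis using Lpos by simp
    qed
    ultimately show "b (L / 2) < 2 + \<epsilon>" using bnd by simp
  qed
qed


end
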